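(* Let $\rho\ge1$, $t\in[-1,1]$, $\lambda=\alpha+i\beta$ with $\alpha,\beta\in\mathbb{R}$, and let $\psi=\psi_0+2\sum_{k=1}^K\psi_kT_k$ with $\psi_0,\dots,\psi_K\in\mathbb{C}$. Then $$\sup_{z\in\mathcal{E}_\rho}\Big|\frac{t+1}{2}\exp\Big(\frac{\lambda}{2}(t+1)(1-z)\Big)\psi\Big(\frac{t+1}{2}(z+1)-1\Big)\Big|\le\frac{t+1}{2}\exp\Big(\alpha+\tfrac12\sqrt{\alpha^2(\rho+\rho^{-1})^2+\beta^2(\rho-\rho^{-1})^2}\Big)\Big(|\psi_0|+\sum_{k=1}^K|\psi_k|(\rho^k+\rho^{-k})\Big).$$
   Context: $T_k$ is the Chebyshev polynomial of the first kind, $T_k(\cos\theta)=\cos(k\theta)$, extended to $\mathbb{C}$ as a polynomial. For $\rho\ge1$, $\mathcal{E}_\rho=\{z\in\mathbb{C}:|z-1|+|z+1|<\rho+\rho^{-1}\}$ is the open Bernstein ellipse. *)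

theory Defs
  imports "HOL-Analysis.Analysis"
begin

fun cheb_T :: "nat \<Rightarrow> complex \<Rightarrow> complex" where
  "cheb_T 0 z = 1"
| "cheb_T (Suc 0) z = z"
| "cheb_T (Suc (Suc n)) z = 2 * z * cheb_T (Suc n) z - cheb_T n z"

definition bernstein_ellipse :: "real \<Rightarrow> complex set" where
  "bernstein_ellipse \<rho> = {z. cmod (z - 1) + cmod (z + 1) < \<rho> + inverse \<rho>}"

definition cheb_series :: "nat \<Rightarrow> (nat \<Rightarrow> complex) \<Rightarrow> complex \<Rightarrow> complex" where
  "cheb_series K c z = c 0 + 2 * (\<Sum>k=1..K. c k * cheb_T k z)"

end

theory Submission
  imports Defs
begin


lemma jouk:
  fixes w :: complex
  obtains u where "u \<noteq> 0" "cmod u \<ge> 1" "w = (u + inverse u)/2"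
proof -
  define v where "v = w + csqrt (w^2-1)"
  have vv: "v * (w - csqrt (w^2-1)) = 1"
    unfolding v_def by (simp add: algebra_simps power2_eq_square[symmetric])
  hence v0: "v \<noteq> 0" by auto
  have iv: "inverse v = w - csqrt (w^2-1)" using vv v0
    by (metis inverse_unique)
  have wv: "w = (v + inverse v)/2" using iv unfolding v_def by simp
  show ?thesis
  proof (cases "cmod v \<ge> 1")
    case True then show ?thesis using that v0 wv by blast
  next
    case False
    hence "cmod (inverse v) \<ge> 1" using v0 by (simp add: norm_inverse one_le_inverse_iff)
    moreover have "w = (inverse v + inverse (inverse v))/2" using wv by simp
    ultimately show ?thesis using that[of "inverse v"] v0 by auto
  qed
qed

lemma ell_sum:
  fixes u :: complex assumes "u \<noteq> 0"
  shows "cmod ((u + inverse u)/2 - 1) + cmod ((u + inverse u)/2 + 1) = cmod u + inverse (cmod u)"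
proof -
  have e1: "(u + inverse u)/2 - 1 = (u-1)^2/(2*u)" using assms by (simp add: field_simps power2_eq_square)
  have e2: "(u + inverse u)/2 + 1 = (u+1)^2/(2*u)" using assms by (simp add: field_simps power2_eq_square)
  have par: "cmod (u-1)^2 + cmod (u+1)^2 = 2 * cmod u ^2 + 2"
    unfolding cmod_power2 by (simp add: power2_eq_square algebra_simps)
  have "cmod ((u + inverse u)/2 - 1) + cmod ((u + inverse u)/2 + 1)
      = (cmod (u-1)^2 + cmod (u+1)^2) / (2 * cmod u)"
    unfolding e1 e2 by (simp add: norm_divide norm_mult norm_power add_divide_distrib)
  also have "\<dots> = cmod u + inverse (cmod u)" using par assms
    by (simp add: field_simps power2_eq_square)
  finally show ?thesis .
qed

lemma inv_mono:
  fixes a b :: real assumes "1 \<le> a" "a \<le> b"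
  shows "a + inverse a \<le> b + inverse b"
proof -
  have "b + inverse b - (a + inverse a) = (b - a) * (a*b - 1) / (a*b)"
    using assms by (simp add: field_simps)
  moreover have "(b - a) * (a*b - 1) / (a*b) \<ge> 0" using assms
    using mult_mono[of 1 a 1 b] by (intro divide_nonneg_pos mult_nonneg_nonneg) auto
  ultimately show ?thesis by linarith
qed

lemma inv_strict:
  fixes a b :: real assumes "1 \<le> a" "a < b"
  shows "a + inverse a < b + inverse b"
proof -
  have "b + inverse b - (a + inverse a) = (b - a) * (a*b - 1) / (a*b)"
    using assms by (simp add: field_simps)
  moreover have "a*b > 1" using assms
    using mult_less_le_imp_less[of 1 b 1 a] by (auto simp: mult.commute)
  moreover have "(b - a) * (a*b - 1) / (a*b) > 0" using assms calculation(2)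
    by (intro divide_pos_pos mult_pos_pos) auto
  ultimately show ?thesis by linarith
qed

lemma cheb_jouk:
  fixes u :: complex assumes "u \<noteq> 0"
  shows "w = (u + inverse u)/2 \<Longrightarrow> 2 * cheb_T k w = u^k + inverse u ^ k"
proof (induction k w rule: cheb_T.induct)
  case (3 n z)
  have "2 * cheb_T (Suc (Suc n)) z = (u + inverse u) * (2 * cheb_T (Suc n) z) - 2 * cheb_T n z"
    using 3(3) by (simp add: algebra_simps)
  also have "\<dots> = (u + inverse u) * (u ^ Suc n + inverse u ^ Suc n) - (u^n + inverse u ^ n)"
    using 3(1)[OF 3(3)] 3(2)[OF 3(3)] by simp
  also have "\<dots> = u ^ Suc (Suc n) + inverse u ^ Suc (Suc n)"
    using assms by (simp add: algebra_simps power_Suc) (simp add: field_simps)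
  finally show ?case .
qed (auto simp: algebra_simps)

lemma cs_ineq:
  fixes p q c d :: real assumes "c^2 + d^2 = 1"
  shows "p*c + q*d \<le> sqrt (p^2 + q^2)"
proof -
  have "(p*c+q*d)^2 \<le> p^2 + q^2"
  proof -
    have "(p^2+q^2)*(c^2+d^2) - (p*c+q*d)^2 = (p*d - q*c)^2" by (simp add: power2_eq_square algebra_simps)
    thus ?thesis using assms by (metis add_le_same_cancel1 diff_ge_0_iff_ge mult.right_neutral zero_le_power2)
  qed
  hence "sqrt ((p*c+q*d)^2) \<le> sqrt (p^2+q^2)" by (rule real_sqrt_le_mono)
  thus ?thesis by simp
qed

lemma T_bound:
  fixes u w :: complex and \<rho> :: real
  assumes "u \<noteq> 0" "1 \<le> cmod u" "cmod u \<le> \<rho>" "w = (u + inverse u)/2"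
  shows "cmod (cheb_T k w) \<le> (\<rho>^k + inverse \<rho> ^ k)/2"
proof -
  have "cmod (2 * cheb_T k w) = cmod (u^k + inverse u ^ k)" using cheb_jouk[OF assms(1) assms(4)] by simp
  also have "\<dots> \<le> cmod u ^ k + inverse (cmod u) ^ k"
    using norm_triangle_ineq[of "u^k" "inverse u ^ k"] by (simp add: norm_power norm_inverse)
  also have "\<dots> \<le> \<rho>^k + inverse \<rho> ^ k"
    using inv_mono[of "cmod u ^ k" "\<rho> ^ k"] assms(2,3)
    by (simp add: power_inverse one_le_power power_mono)
  finally show ?thesis by (simp add: norm_mult)
qed

lemma two_le: "(1::real) \<le> \<rho> \<Longrightarrow> 2 \<le> \<rho> + inverse \<rho>"
  using inv_mono[of 1 \<rho>] by simp

lemma in_ell: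
  fixes z :: complex and s \<rho> :: real
  assumes "cmod (z - 1) + cmod (z + 1) \<le> \<rho> + inverse \<rho>" "0 \<le> s" "s \<le> 1" "1 \<le> \<rho>"
  shows "cmod ((of_real s * (z+1) - 1) - 1) + cmod ((of_real s * (z+1) - 1) + 1) \<le> \<rho> + inverse \<rho>"
proof -
  have e1: "(of_real s * (z+1) - 1) - 1 = of_real s * (z - 1) + of_real (2*(s-1))" by (simp add: algebra_simps)
  have n2: "cmod (complex_of_real (2*(s-1))) = 2*(1-s)" using assms(3) by (simp only: norm_of_real) simp
  have "cmod ((of_real s * (z+1) - 1) - 1) \<le> cmod (of_real s * (z - 1)) + cmod (complex_of_real (2*(s-1)))"
    unfolding e1 by (rule norm_triangle_ineq)
  hence "cmod ((of_real s * (z+1) - 1) - 1) \<le> s * cmod (z-1) + 2*(1-s)"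
    unfolding n2 using assms(2) by (simp add: norm_mult)
  moreover have "cmod ((of_real s * (z+1) - 1) + 1) = s * cmod (z+1)" using assms(2) by (simp add: norm_mult)
  ultimately have "cmod ((of_real s * (z+1) - 1) - 1) + cmod ((of_real s * (z+1) - 1) + 1)
     \<le> s * (cmod (z-1) + cmod (z+1)) + (1-s) * 2" by (simp add: algebra_simps)
  also have "\<dots> \<le> s * (\<rho> + inverse \<rho>) + (1-s)*(\<rho> + inverse \<rho>)"
  proof -
    have "s * (cmod (z-1) + cmod (z+1)) \<le> s * (\<rho> + inverse \<rho>)" using assms by (intro mult_left_mono) auto
    moreover have "(1-s) * 2 \<le> (1-s) * (\<rho> + inverse \<rho>)" using assms two_le[OF assms(4)] by (intro mult_left_mono) auto
    ultimately show ?thesis by linarith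
  qed
  finally show ?thesis by (simp add: algebra_simps)
qed

lemma radius:
  fixes u w :: complex and \<rho> :: real
  assumes "u \<noteq> 0" "1 \<le> cmod u" "w = (u + inverse u)/2" "1 \<le> \<rho>"
    "cmod (w - 1) + cmod (w + 1) \<le> \<rho> + inverse \<rho>"
  shows "cmod u \<le> \<rho>"
proof (rule ccontr)
  assume "\<not> cmod u \<le> \<rho>"
  hence "\<rho> + inverse \<rho> < cmod u + inverse (cmod u)" using inv_strict[of \<rho> "cmod u"] assms by simp
  moreover have "cmod (w - 1) + cmod (w + 1) = cmod u + inverse (cmod u)"
    unfolding assms(3) by (rule ell_sum[OF assms(1)])
  ultimately show False using assms(5) by simp
qed

lemma series_bound:
  assumes "\<And>k. cmod (cheb_T k w) \<le> (\<rho>^k + inverse \<rho> ^ k)/2"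
  shows "cmod (cheb_series K c w) \<le> cmod (c 0) + (\<Sum>k=1..K. cmod (c k) * (\<rho> ^ k + inverse \<rho> ^ k))"
proof -
  have "cmod (cheb_series K c w) \<le> cmod (c 0) + cmod (2 * (\<Sum>k=1..K. c k * cheb_T k w))"
    unfolding cheb_series_def by (rule norm_triangle_ineq)
  also have "cmod (2 * (\<Sum>k=1..K. c k * cheb_T k w)) \<le> 2 * (\<Sum>k=1..K. cmod (c k) * cmod (cheb_T k w))"
    using norm_sum[of "\<lambda>k. c k * cheb_T k w" "{1..K}"] by (simp add: norm_mult)
  also have "\<dots> \<le> 2 * (\<Sum>k=1..K. cmod (c k) * ((\<rho>^k + inverse \<rho> ^ k)/2))"
    using assms by (intro mult_left_mono sum_mono mult_left_mono) auto
  also have "\<dots> = (\<Sum>k=1..K. cmod (c k) * (\<rho> ^ k + inverse \<rho> ^ k))"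
    by (simp add: sum_distrib_left)
  finally show ?thesis by simp
qed

lemma re_bound:
  fixes u z lam :: complex and \<rho> :: real
  assumes "u \<noteq> 0" "1 \<le> cmod u" "cmod u \<le> \<rho>" "z = (u + inverse u)/2"
  shows "- Re (lam * z) \<le> sqrt ((Re lam)\<^sup>2 * (\<rho> + inverse \<rho>)\<^sup>2 + (Im lam)\<^sup>2 * (\<rho> - inverse \<rho>)\<^sup>2) / 2"
proof -
  define r where "r = cmod u"
  define a1 where "a1 = Re u"
  define b1 where "b1 = Im u"
  define P where "P = r + inverse r"
  define Q where "Q = r - inverse r"
  have r0: "r > 0" using assms(1) r_def by simp
  have r2: "r^2 = a1^2 + b1^2" unfolding r_def a1_def b1_def by (simp add: cmod_power2)
  have c1: "(a1/r)^2 + (b1/r)^2 = 1" using r0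
    by (simp add: power_divide add_divide_distrib[symmetric] r2[symmetric])
  have Ri: "Re (inverse u) = a1 / r^2" unfolding r2 a1_def b1_def by simp
  have Ii: "Im (inverse u) = - b1 / r^2" unfolding r2 a1_def b1_def by simp
  have Rz0: "Re z = (a1 + a1 / r^2)/2" unfolding assms(4) using Ri a1_def by simp
  have Iz0: "Im z = (b1 - b1 / r^2)/2" unfolding assms(4) using Ii b1_def by simp
  have Rez: "Re z = (a1/r) * P / 2" using r0 unfolding Rz0 P_def
    by (simp add: field_simps power2_eq_square)
  have Imz: "Im z = (b1/r) * Q / 2" using r0 unfolding Iz0 Q_def
    by (simp add: field_simps power2_eq_square)
  have "- Re (lam * z) = ((- Re lam * P) * (a1/r) + (Im lam * Q) * (b1/r)) / 2"
    by (simp add: Rez Imz algebra_simps)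
  also have "\<dots> \<le> sqrt ((- Re lam * P)^2 + (Im lam * Q)^2) / 2"
    using divide_right_mono[OF cs_ineq[OF c1, of "- Re lam * P" "Im lam * Q"], of 2] by simp
  also have "\<dots> \<le> sqrt ((Re lam)\<^sup>2 * (\<rho> + inverse \<rho>)\<^sup>2 + (Im lam)\<^sup>2 * (\<rho> - inverse \<rho>)\<^sup>2) / 2"
  proof -
    have P0: "0 \<le> P" using r0 P_def by simp
    have PA: "P \<le> \<rho> + inverse \<rho>" using inv_mono[of r \<rho>] assms r_def P_def by simp
    have Q0: "0 \<le> Q" using assms(2) r_def Q_def by (simp add: inverse_le_1_iff order_trans[of _ 1])
    have QB: "Q \<le> \<rho> - inverse \<rho>" using assms r_def Q_def r0
      by (simp add: le_imp_inverse_le diff_mono)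
    have "P^2 \<le> (\<rho> + inverse \<rho>)^2" using P0 PA by (intro power_mono)
    moreover have "Q^2 \<le> (\<rho> - inverse \<rho>)^2" using Q0 QB by (intro power_mono)
    ultimately have "(- Re lam * P)^2 + (Im lam * Q)^2 \<le> (Re lam)\<^sup>2 * (\<rho> + inverse \<rho>)\<^sup>2 + (Im lam)\<^sup>2 * (\<rho> - inverse \<rho>)\<^sup>2"
      by (simp add: power_mult_distrib add_mono mult_left_mono)
    thus ?thesis by (simp add: divide_right_mono)
  qed
  finally show ?thesis .
qed


theorem lemmaC3:
  fixes \<rho> t :: real and lam :: complex and K :: nat and c :: "nat \<Rightarrow> complex"
  assumes "\<rho> \<ge> 1" and "-1 \<le> t" and "t \<le> 1"
  shows "(SUP z\<in>bernstein_ellipse \<rho>.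
            ereal (cmod (complex_of_real ((t + 1) / 2)
              * exp (lam / 2 * complex_of_real (t + 1) * (1 - z))
              * cheb_series K c (complex_of_real ((t + 1) / 2) * (z + 1) - 1))))
         \<le> ereal ((t + 1) / 2
              * exp (Re lam + sqrt ((Re lam)\<^sup>2 * (\<rho> + inverse \<rho>)\<^sup>2
                                   + (Im lam)\<^sup>2 * (\<rho> - inverse \<rho>)\<^sup>2) / 2)
              * (cmod (c 0) + (\<Sum>k=1..K. cmod (c k) * (\<rho> ^ k + inverse \<rho> ^ k))))"
proof -
  define s where "s = (t + 1) / 2"
  define A where "A = sqrt ((Re lam)\<^sup>2 * (\<rho> + inverse \<rho>)\<^sup>2 + (Im lam)\<^sup>2 * (\<rho> - inverse \<rho>)\<^sup>2) / 2"
  define C where "C = cmod (c 0) + (\<Sum>k=1..K. cmod (c k) * (\<rho> ^ k + inverse \<rho> ^ k))"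
  have s0: "0 \<le> s" "s \<le> 1" using assms s_def by auto
  have AgeA: "\<bar>Re lam\<bar> \<le> A"
  proof -
    have "sqrt ((Re lam)\<^sup>2 * (\<rho> + inverse \<rho>)\<^sup>2) \<le> sqrt ((Re lam)\<^sup>2 * (\<rho> + inverse \<rho>)\<^sup>2 + (Im lam)\<^sup>2 * (\<rho> - inverse \<rho>)\<^sup>2)"
      by (intro real_sqrt_le_mono) simp
    moreover have "sqrt ((Re lam)\<^sup>2 * (\<rho> + inverse \<rho>)\<^sup>2) = \<bar>Re lam\<bar> * (\<rho> + inverse \<rho>)"
      using assms(1) by (simp add: real_sqrt_mult)
    moreover have "\<bar>Re lam\<bar> * 2 \<le> \<bar>Re lam\<bar> * (\<rho> + inverse \<rho>)"
      using two_le[OF assms(1)] by (intro mult_left_mono) auto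
    ultimately show ?thesis unfolding A_def by linarith
  qed
  have "ereal (cmod (complex_of_real ((t + 1) / 2)
              * exp (lam / 2 * complex_of_real (t + 1) * (1 - z))
              * cheb_series K c (complex_of_real ((t + 1) / 2) * (z + 1) - 1)))
        \<le> ereal ((t + 1) / 2 * exp (Re lam + A) * C)"
    if z: "z \<in> bernstein_ellipse \<rho>" for z
  proof -
    have zl: "cmod (z - 1) + cmod (z + 1) \<le> \<rho> + inverse \<rho>"
      using z unfolding bernstein_ellipse_def by simp
    obtain u where u: "u \<noteq> 0" "cmod u \<ge> 1" "z = (u + inverse u)/2" by (rule jouk)
    have ur: "cmod u \<le> \<rho>" using radius[OF u assms(1) zl] .
    define w where "w = complex_of_real s * (z + 1) - 1"
    have wl: "cmod (w - 1) + cmod (w + 1) \<le> \<rho> + inverse \<rho>"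
      unfolding w_def using in_ell[OF zl s0 assms(1)] .
    obtain v where v: "v \<noteq> 0" "cmod v \<ge> 1" "w = (v + inverse v)/2" by (rule jouk)
    have vr: "cmod v \<le> \<rho>" using radius[OF v assms(1) wl] .
    have psi: "cmod (cheb_series K c w) \<le> C"
      unfolding C_def by (rule series_bound) (rule T_bound[OF v(1,2) vr v(3)])
    have re: "- Re (lam * z) \<le> A" unfolding A_def by (rule re_bound[OF u(1,2) ur u(3)])
    have ee: "lam / 2 * complex_of_real (t + 1) * (1 - z) = complex_of_real s * (lam - lam * z)"
      unfolding s_def by (simp add: algebra_simps)
    have "Re (complex_of_real s * (lam - lam * z)) = s * (Re lam - Re (lam * z))" by simp
    also have "\<dots> \<le> s * (Re lam + A)" using re s0 by (intro mult_left_mono) auto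
    also have "\<dots> \<le> Re lam + A" using s0 AgeA by (simp add: mult_left_le_one_le)
    finally have reb: "Re (lam / 2 * complex_of_real (t + 1) * (1 - z)) \<le> Re lam + A" unfolding ee .
    have "cmod (complex_of_real ((t + 1) / 2)
              * exp (lam / 2 * complex_of_real (t + 1) * (1 - z))
              * cheb_series K c (complex_of_real ((t + 1) / 2) * (z + 1) - 1))
         = s * exp (Re (lam / 2 * complex_of_real (t + 1) * (1 - z))) * cmod (cheb_series K c w)"
      using s0 unfolding w_def s_def by (simp add: norm_mult norm_exp_eq_Re)
    also have "\<dots> \<le> s * exp (Re lam + A) * C"
      using reb psi s0 by (intro mult_mono) auto
    finally show ?thesis unfolding s_def by simp
  qed
  hence "(SUP z\<in>bernstein_ellipse \<rho>.
            ereal (cmod (complex_of_real ((t + 1) / 2)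
              * exp (lam / 2 * complex_of_real (t + 1) * (1 - z))
              * cheb_series K c (complex_of_real ((t + 1) / 2) * (z + 1) - 1))))
        \<le> ereal ((t + 1) / 2 * exp (Re lam + A) * C)" by (rule SUP_least)
  thus ?thesis unfolding A_def C_def by (simp add: add_divide_distrib)
qed

end
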